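(* Let $\mathbf{C}_1$ and $\mathbf{C}_2$ be categories such that $\hom_{\mathbf{C}_i}(\mathcal{A},\mathcal{B})$ is finite for each $i\in\{1,2\}$ and all objects $\mathcal{A},\mathcal{B}$ of $\mathbf{C}_i$. If $\mathbf{C}_1$ and $\mathbf{C}_2$ both have the Ramsey property for objects, then $\mathbf{C}_1\times\mathbf{C}_2$ has the Ramsey property for objects; and if $\mathbf{C}_1$ and $\mathbf{C}_2$ both have the Ramsey property for morphisms, then $\mathbf{C}_1\times\mathbf{C}_2$ has the Ramsey property for morphisms.
   Context: $\mathbf{C}_1\times\mathbf{C}_2$ is the product category: objects are pairs $(\mathcal{A}_1,\mathcal{A}_2)$ of objects, morphisms are pairs $(f_1,f_2)$ with $f_i$ a morphism of $\mathbf{C}_i$, composed componentwise. For objects $\mathcal{A},\mathcal{B}$ of a category, $\hom(\mathcal{A},\mathcal{B})$ is the set of morphisms $\mathcal{A}\to\mathcal{B}$; write $\mathcal{A}\to\mathcal{B}$ if it is nonempty. $\mathrm{Aut}(\mathcal{A})$ is the set of invertible morphisms $\mathcal{A}\to\mathcal{A}$. On $\hom(\mathcal{A},\mathcal{B})$ let $f\sim_\mathcal{A} f'$ iff $f'=f\cdot\alpha$ for some $\alpha\in\mathrm{Aut}(\mathcal{A})$, and $\binom{\mathcal{B}}{\mathcal{A}}=\hom(\mathcal{A},\mathcal{B})/\sim_\mathcal{A}$; for $w:\mathcal{B}\to\mathcal{C}$ set $w\cdot(f/\sim_\mathcal{A})=(w\cdot f)/\sim_\mathcal{A}$. A $k$-coloring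 of a set is a decomposition into $k$ pairwise disjoint sets $\mathcal{M}_1,\dots,\mathcal{M}_k$. For $k\ge2$, $\mathcal{C}\longrightarrow(\mathcal{B})^{\mathcal{A}}_k$ means $\mathcal{A}\to\mathcal{B}\to\mathcal{C}$ and for every $k$-coloring of $\binom{\mathcal{C}}{\mathcal{A}}$ there are $i$ and $w:\mathcal{B}\to\mathcal{C}$ with $w\cdot\binom{\mathcal{B}}{\mathcal{A}}\subseteq\mathcal{M}_i$; $\mathcal{C}\overset{hom}{\longrightarrow}(\mathcal{B})^{\mathcal{A}}_k$ is defined likewise with $\hom(\mathcal{A},\mathcal{C})$ and $w\cdot\hom(\mathcal{A},\mathcal{B})$. A category has the Ramsey property for objects (resp. morphisms) if for every $k\ge2$ and all objects $\mathcal{A}\to\mathcal{B}$ there is an object $\mathcal{C}$ with $\mathcal{C}\longrightarrow(\mathcal{B})^{\mathcal{A}}_k$ (resp. $\mathcal{C}\overset{hom}{\longrightarrow}(\mathcal{B})^{\mathcal{A}}_k$). *)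

theory Defs
  imports Main
begin

text \<open>A (small) category: objects, arrows, domain, codomain, identities and
composition; Comp g f is the composite g . f (first f, then g).\<close>

record ('o, 'm) cat =
  Obj :: "'o set"
  Arr :: "'m set"
  Dom :: "'m \<Rightarrow> 'o"
  Cod :: "'m \<Rightarrow> 'o"
  Id  :: "'o \<Rightarrow> 'm"
  Comp :: "'m \<Rightarrow> 'm \<Rightarrow> 'm"

definition hom :: "('o, 'm) cat \<Rightarrow> 'o \<Rightarrow> 'o \<Rightarrow> 'm set" where
  "hom C A B = {f \<in> Arr C. Dom C f = A \<and> Cod C f = B}"

definition is_category :: "('o, 'm) cat \<Rightarrow> bool" where
  "is_category C \<longleftrightarrow>
     (\<forall>f \<in> Arr C. Dom C f \<in> Obj C \<and> Cod C f \<in> Obj C) \<and>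
     (\<forall>A \<in> Obj C. Id C A \<in> hom C A A) \<and>
     (\<forall>A \<in> Obj C. \<forall>B \<in> Obj C. \<forall>Cc \<in> Obj C. \<forall>f \<in> hom C A B. \<forall>g \<in> hom C B Cc.
         Comp C g f \<in> hom C A Cc) \<and>
     (\<forall>A \<in> Obj C. \<forall>B \<in> Obj C. \<forall>f \<in> hom C A B.
         Comp C (Id C B) f = f \<and> Comp C f (Id C A) = f) \<and>
     (\<forall>A \<in> Obj C. \<forall>B \<in> Obj C. \<forall>Cc \<in> Obj C. \<forall>D \<in> Obj C.
       \<forall>f \<in> hom C A B. \<forall>g \<in> hom C B Cc. \<forall>h \<in> hom C Cc D.
         Comp C h (Comp C g f) = Comp C (Comp C h g) f)"

definition prod_cat :: "('o1, 'm1) cat \<Rightarrow> ('o2, 'm2) cat \<Rightarrow> ('o1 \<times> 'o2, 'm1 \<times> 'm2) cat" where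
  "prod_cat C1 C2 =
     \<lparr> Obj = Obj C1 \<times> Obj C2,
       Arr = Arr C1 \<times> Arr C2,
       Dom = (\<lambda>(f1, f2). (Dom C1 f1, Dom C2 f2)),
       Cod = (\<lambda>(f1, f2). (Cod C1 f1, Cod C2 f2)),
       Id = (\<lambda>(A1, A2). (Id C1 A1, Id C2 A2)),
       Comp = (\<lambda>(g1, g2) (f1, f2). (Comp C1 g1 f1, Comp C2 g2 f2)) \<rparr>"

definition locally_finite :: "('o, 'm) cat \<Rightarrow> bool" where
  "locally_finite C \<longleftrightarrow> (\<forall>A \<in> Obj C. \<forall>B \<in> Obj C. finite (hom C A B))"

definition arrow_to :: "('o, 'm) cat \<Rightarrow> 'o \<Rightarrow> 'o \<Rightarrow> bool" where
  "arrow_to C A B \<longleftrightarrow> hom C A B \<noteq> {}"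

definition Aut :: "('o, 'm) cat \<Rightarrow> 'o \<Rightarrow> 'm set" where
  "Aut C A = {\<alpha> \<in> hom C A A. \<exists>\<beta> \<in> hom C A A.
                 Comp C \<beta> \<alpha> = Id C A \<and> Comp C \<alpha> \<beta> = Id C A}"

definition aut_class :: "('o, 'm) cat \<Rightarrow> 'o \<Rightarrow> 'm \<Rightarrow> 'm set" where
  "aut_class C A f = {Comp C f \<alpha> | \<alpha>. \<alpha> \<in> Aut C A}"

definition binom :: "('o, 'm) cat \<Rightarrow> 'o \<Rightarrow> 'o \<Rightarrow> 'm set set" where
  "binom C B A = aut_class C A ` hom C A B"

definition is_coloring :: "nat \<Rightarrow> 'a set \<Rightarrow> (nat \<Rightarrow> 'a set) \<Rightarrow> bool" where
  "is_coloring k S M \<longleftrightarrow> (\<Union>i<k. M i) = S \<and>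
      (\<forall>i<k. \<forall>j<k. i \<noteq> j \<longrightarrow> M i \<inter> M j = {})"

text \<open>Cc --> (B)^A_k  (colourings of objects, i.e. of Aut-classes)\<close>
definition ramsey_arrow :: "('o, 'm) cat \<Rightarrow> 'o \<Rightarrow> 'o \<Rightarrow> 'o \<Rightarrow> nat \<Rightarrow> bool" where
  "ramsey_arrow C Cc B A k \<longleftrightarrow> arrow_to C A B \<and> arrow_to C B Cc \<and>
     (\<forall>M. is_coloring k (binom C Cc A) M \<longrightarrow>
        (\<exists>i<k. \<exists>w \<in> hom C B Cc.
           (\<forall>f \<in> hom C A B. aut_class C A (Comp C w f) \<in> M i)))"

definition ramsey_arrow_hom :: "('o, 'm) cat \<Rightarrow> 'o \<Rightarrow> 'o \<Rightarrow> 'o \<Rightarrow> nat \<Rightarrow> bool" where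
  "ramsey_arrow_hom C Cc B A k \<longleftrightarrow> arrow_to C A B \<and> arrow_to C B Cc \<and>
     (\<forall>M. is_coloring k (hom C A Cc) M \<longrightarrow>
        (\<exists>i<k. \<exists>w \<in> hom C B Cc. Comp C w ` hom C A B \<subseteq> M i))"

definition ramsey_objects :: "('o, 'm) cat \<Rightarrow> bool" where
  "ramsey_objects C \<longleftrightarrow> (\<forall>k \<ge> 2. \<forall>A \<in> Obj C. \<forall>B \<in> Obj C. arrow_to C A B \<longrightarrow>
      (\<exists>Cc \<in> Obj C. ramsey_arrow C Cc B A k))"

definition ramsey_morphisms :: "('o, 'm) cat \<Rightarrow> bool" where
  "ramsey_morphisms C \<longleftrightarrow> (\<forall>k \<ge> 2. \<forall>A \<in> Obj C. \<forall>B \<in> Obj C. arrow_to C A B \<longrightarrow>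
      (\<exists>Cc \<in> Obj C. ramsey_arrow_hom C Cc B A k))"

end

theory Submission
  imports Defs "HOL-Library.FuncSet"
begin

lemma coloring_from_fun:
  assumes "c ` S \<subseteq> Y" "finite Y" "card Y \<le> k" "bij_betw h {0..<card Y} Y"
  shows "is_coloring k S (\<lambda>i. if i < card Y then {f\<in>S. c f = h i} else {})"
proof -
  have "(\<Union>i<k. (if i < card Y then {f\<in>S. c f = h i} else {})) = S"
  proof
    show "S \<subseteq> (\<Union>i<k. (if i < card Y then {f\<in>S. c f = h i} else {}))"
    proof
      fix f assume f: "f \<in> S"
      then have "c f \<in> Y" using assms(1) by auto
      then obtain i where "i \<in> {0..<card Y}" "h i = c f"
        using assms(4) by (metis bij_betw_iff_bijections)
      then show "f \<in> (\<Union>i<k. (if i < card Y then {f\<in>S. c f = h i} else {}))"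
        using f assms(3) by (auto intro!: bexI[of _ i])
    qed
  qed (auto split: if_splits)
  moreover have "\<forall>i<k. \<forall>j<k. i \<noteq> j \<longrightarrow>
      (if i < card Y then {f\<in>S. c f = h i} else {}) \<inter> (if j < card Y then {f\<in>S. c f = h j} else {}) = {}"
    using assms(4) unfolding bij_betw_def inj_on_def by auto
  ultimately show ?thesis unfolding is_coloring_def by blast
qed

lemma mono_hom:
  assumes "ramsey_arrow_hom C Cc B A k" "c ` hom C A Cc \<subseteq> Y" "finite Y" "card Y \<le> k"
  shows "\<exists>w\<in>hom C B Cc. \<exists>y. \<forall>f\<in>hom C A B. c (Comp C w f) = y"
proof -
  obtain h where h: "bij_betw h {0..<card Y} Y" using ex_bij_betw_nat_finite assms(3) by blast
  define M where "M = (\<lambda>i. if i < card Y then {f\<in>hom C A Cc. c f = h i} else {})"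
  have "is_coloring k (hom C A Cc) M" unfolding M_def using coloring_from_fun[OF assms(2-4) h] .
  then obtain i w where i: "i < k" "w \<in> hom C B Cc" "Comp C w ` hom C A B \<subseteq> M i"
    using assms(1) unfolding ramsey_arrow_hom_def by blast
  obtain f0 where "f0 \<in> hom C A B" using assms(1) unfolding ramsey_arrow_hom_def arrow_to_def by blast
  then have "Comp C w f0 \<in> M i" using i by auto
  then have "i < card Y" unfolding M_def by (auto split: if_splits)
  then have "\<forall>f\<in>hom C A B. c (Comp C w f) = h i" using i unfolding M_def by auto
  then show ?thesis using i by blast
qed

lemma mono_obj:
  assumes "ramsey_arrow C Cc B A k" "c ` binom C Cc A \<subseteq> Y" "finite Y" "card Y \<le> k"
  shows "\<exists>w\<in>hom C B Cc. \<exists>y. \<forall>f\<in>hom C A B. c (aut_class C A (Comp C w f)) = y"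
proof -
  obtain h where h: "bij_betw h {0..<card Y} Y" using ex_bij_betw_nat_finite assms(3) by blast
  define M where "M = (\<lambda>i. if i < card Y then {f\<in>binom C Cc A. c f = h i} else {})"
  have "is_coloring k (binom C Cc A) M" unfolding M_def using coloring_from_fun[OF assms(2-4) h] .
  then obtain i w where i: "i < k" "w \<in> hom C B Cc" "\<forall>f \<in> hom C A B. aut_class C A (Comp C w f) \<in> M i"
    using assms(1) unfolding ramsey_arrow_def by blast
  obtain f0 where "f0 \<in> hom C A B" using assms(1) unfolding ramsey_arrow_def arrow_to_def by blast
  then have "aut_class C A (Comp C w f0) \<in> M i" using i by auto
  then have "i < card Y" unfolding M_def by (auto split: if_splits)
  then have "\<forall>f\<in>hom C A B. c (aut_class C A (Comp C w f)) = h i" using i unfolding M_def by auto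
  then show ?thesis using i by blast
qed

lemma hom_prod: "hom (prod_cat C1 C2) (A1, A2) (B1, B2) = hom C1 A1 B1 \<times> hom C2 A2 B2"
  unfolding hom_def prod_cat_def by auto

lemma comp_prod: "Comp (prod_cat C1 C2) (w1, w2) (f1, f2) = (Comp C1 w1 f1, Comp C2 w2 f2)"
  unfolding prod_cat_def by simp

lemma obj_prod: "Obj (prod_cat C1 C2) = Obj C1 \<times> Obj C2"
  unfolding prod_cat_def by simp

lemma aut_prod: "Aut (prod_cat C1 C2) (A1, A2) = Aut C1 A1 \<times> Aut C2 A2"
  unfolding Aut_def hom_prod
  by (auto simp: prod_cat_def)

lemma aut_class_prod:
  "aut_class (prod_cat C1 C2) (A1, A2) (f1, f2) = aut_class C1 A1 f1 \<times> aut_class C2 A2 f2"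
  unfolding aut_class_def aut_prod
  by (auto simp: prod_cat_def)

lemma arrow_prod: "arrow_to (prod_cat C1 C2) (A1, A2) (B1, B2) \<longleftrightarrow> arrow_to C1 A1 B1 \<and> arrow_to C2 A2 B2"
  unfolding arrow_to_def hom_prod by auto

lemma cat_comp: "is_category C \<Longrightarrow> A \<in> Obj C \<Longrightarrow> B \<in> Obj C \<Longrightarrow> Cc \<in> Obj C \<Longrightarrow>
   f \<in> hom C A B \<Longrightarrow> g \<in> hom C B Cc \<Longrightarrow> Comp C g f \<in> hom C A Cc"
  unfolding is_category_def by blast

lemma prod_morph:
  assumes c1: "is_category C1" and c2: "is_category C2"
    and l2: "locally_finite C2"
    and r1: "ramsey_morphisms C1" and r2: "ramsey_morphisms C2"
  shows "ramsey_morphisms (prod_cat C1 C2)"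
  unfolding ramsey_morphisms_def
proof (intro allI impI ballI)
  fix k :: nat and A B
  assume k: "2 \<le> k" and A: "A \<in> Obj (prod_cat C1 C2)" and B: "B \<in> Obj (prod_cat C1 C2)"
    and AB: "arrow_to (prod_cat C1 C2) A B"
  obtain A1 A2 where Ae: "A = (A1, A2)" by fastforce
  obtain B1 B2 where Be: "B = (B1, B2)" by fastforce
  have A1: "A1 \<in> Obj C1" and A2: "A2 \<in> Obj C2" using A Ae obj_prod by auto
  have B1: "B1 \<in> Obj C1" and B2: "B2 \<in> Obj C2" using B Be obj_prod by auto
  have AB1: "arrow_to C1 A1 B1" and AB2: "arrow_to C2 A2 B2" using AB unfolding Ae Be arrow_prod by auto
  obtain D2 where D2: "D2 \<in> Obj C2" "ramsey_arrow_hom C2 D2 B2 A2 k"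
    using r2 k A2 B2 AB2 unfolding ramsey_morphisms_def by blast
  define H2 where "H2 = hom C2 A2 D2"
  have fH2: "finite H2" using l2 A2 D2(1) unfolding locally_finite_def H2_def by blast
  define Y where "Y = (\<Pi>\<^sub>E g\<in>H2. {..<k})"
  have fY: "finite Y" unfolding Y_def using fH2 by (simp add: finite_PiE)
  define k1 where "k1 = max 2 (card Y)"
  obtain D1 where D1: "D1 \<in> Obj C1" "ramsey_arrow_hom C1 D1 B1 A1 k1"
    using r1 A1 B1 AB1 unfolding ramsey_morphisms_def k1_def by (metis max.cobounded1)
  show "\<exists>Cc\<in>Obj (prod_cat C1 C2). ramsey_arrow_hom (prod_cat C1 C2) Cc B A k"
  proof (intro bexI[of _ "(D1, D2)"])
    show "(D1, D2) \<in> Obj (prod_cat C1 C2)" using D1 D2 obj_prod by auto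
    have BD1: "arrow_to C1 B1 D1" and BD2: "arrow_to C2 B2 D2"
      using D1 D2 unfolding ramsey_arrow_hom_def by auto
    show "ramsey_arrow_hom (prod_cat C1 C2) (D1, D2) B A k"
      unfolding ramsey_arrow_hom_def
    proof (intro conjI allI impI)
      show "arrow_to (prod_cat C1 C2) A B" by fact
      show "arrow_to (prod_cat C1 C2) B (D1, D2)" unfolding Be arrow_prod using BD1 BD2 by auto
      fix M assume M: "is_coloring k (hom (prod_cat C1 C2) A (D1, D2)) M"
      define col where "col = (\<lambda>f. SOME i. i < k \<and> f \<in> M i)"
      have col: "col f < k \<and> f \<in> M (col f)" if "f \<in> hom (prod_cat C1 C2) A (D1, D2)" for f
      proof -
        have "\<exists>i. i < k \<and> f \<in> M i" using M that unfolding is_coloring_def by blast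
        then show ?thesis unfolding col_def by (rule someI_ex)
      qed
      define c1 where "c1 = (\<lambda>f1. \<lambda>g\<in>H2. col (f1, g))"
      have "c1 f1 \<in> Y" if "f1 \<in> hom C1 A1 D1" for f1
      proof -
        have "col (f1, g) < k" if "g \<in> H2" for g
          using col[of "(f1, g)"] that \<open>f1 \<in> hom C1 A1 D1\<close> by (simp add: Ae hom_prod H2_def)
        then show ?thesis unfolding c1_def Y_def by auto
      qed
      then have "c1 ` hom C1 A1 D1 \<subseteq> Y" by blast
      moreover have "card Y \<le> k1" by (simp add: k1_def)
      ultimately obtain w1 y where w1: "w1 \<in> hom C1 B1 D1" "\<forall>f\<in>hom C1 A1 B1. c1 (Comp C1 w1 f) = y"
        using mono_hom[OF D1(2) _ fY] by blast
      obtain f0 where f0: "f0 \<in> hom C1 A1 B1" using AB1 unfolding arrow_to_def by blast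
      define c2 where "c2 = (\<lambda>g. col (Comp C1 w1 f0, g))"
      have wf0: "Comp C1 w1 f0 \<in> hom C1 A1 D1" using cat_comp[OF c1 A1 B1 D1(1) f0 w1(1)] .
      have "c2 g < k" if "g \<in> hom C2 A2 D2" for g
        using col[of "(Comp C1 w1 f0, g)"] that wf0 unfolding c2_def by (simp add: Ae hom_prod)
      then have "c2 ` hom C2 A2 D2 \<subseteq> {..<k}" by blast
      moreover have "card {..<k} \<le> k" by simp
      ultimately obtain w2 i where w2: "w2 \<in> hom C2 B2 D2" "\<forall>f\<in>hom C2 A2 B2. c2 (Comp C2 w2 f) = i"
        using mono_hom[OF D2(2) _ finite_lessThan] by blast
      have ik: "i < k"
      proof -
        obtain g0 where g0: "g0 \<in> hom C2 A2 B2" using AB2 unfolding arrow_to_def by blast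
        have "Comp C2 w2 g0 \<in> hom C2 A2 D2" using cat_comp[OF c2 A2 B2 D2(1) g0 w2(1)] .
        then have "c2 (Comp C2 w2 g0) < k" using \<open>c2 ` hom C2 A2 D2 \<subseteq> {..<k}\<close> by auto
        then show ?thesis using w2 g0 by auto
      qed
      have "Comp (prod_cat C1 C2) (w1, w2) ` hom (prod_cat C1 C2) A B \<subseteq> M i"
      proof
        fix x assume "x \<in> Comp (prod_cat C1 C2) (w1, w2) ` hom (prod_cat C1 C2) A B"
        then obtain f1 f2 where f: "f1 \<in> hom C1 A1 B1" "f2 \<in> hom C2 A2 B2"
          and x: "x = (Comp C1 w1 f1, Comp C2 w2 f2)"
          by (auto simp: Ae Be hom_prod comp_prod)
        have g: "Comp C2 w2 f2 \<in> H2" unfolding H2_def using cat_comp[OF c2 A2 B2 D2(1) f(2) w2(1)] .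
        have "col x = c1 (Comp C1 w1 f1) (Comp C2 w2 f2)" using g x unfolding c1_def by simp
        also have "\<dots> = c1 (Comp C1 w1 f0) (Comp C2 w2 f2)" using w1 f f0 by simp
        also have "\<dots> = c2 (Comp C2 w2 f2)" using g unfolding c1_def c2_def by simp
        also have "\<dots> = i" using w2 f by simp
        finally have "col x = i" .
        moreover have "x \<in> hom (prod_cat C1 C2) A (D1, D2)"
          using x cat_comp[OF c2 A2 B2 D2(1) f(2) w2(1)] cat_comp[OF c1 A1 B1 D1(1) f(1) w1(1)]
          by (simp add: Ae hom_prod)
        ultimately show "x \<in> M i" using col by metis
      qed
      then show "\<exists>i<k. \<exists>w\<in>hom (prod_cat C1 C2) B (D1, D2). Comp (prod_cat C1 C2) w ` hom (prod_cat C1 C2) A B \<subseteq> M i"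
        using ik w1 w2 by (auto simp: Be hom_prod intro!: exI[of _ i] bexI[of _ "(w1, w2)"])
    qed
  qed
qed

lemma binom_prod_mem:
  assumes "f1 \<in> hom C1 A1 D1" "g \<in> hom C2 A2 D2"
  shows "aut_class C1 A1 f1 \<times> aut_class C2 A2 g \<in> binom (prod_cat C1 C2) (D1, D2) (A1, A2)"
proof -
  have "(f1, g) \<in> hom (prod_cat C1 C2) (A1, A2) (D1, D2)" using assms by (simp add: hom_prod)
  then show ?thesis unfolding binom_def aut_class_prod[symmetric] by blast
qed

lemma prod_obj:
  assumes c1: "is_category C1" and c2: "is_category C2"
    and l2: "locally_finite C2"
    and r1: "ramsey_objects C1" and r2: "ramsey_objects C2"
  shows "ramsey_objects (prod_cat C1 C2)"
  unfolding ramsey_objects_def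
proof (intro allI impI ballI)
  fix k :: nat and A B
  assume k: "2 \<le> k" and A: "A \<in> Obj (prod_cat C1 C2)" and B: "B \<in> Obj (prod_cat C1 C2)"
    and AB: "arrow_to (prod_cat C1 C2) A B"
  obtain A1 A2 where Ae: "A = (A1, A2)" by fastforce
  obtain B1 B2 where Be: "B = (B1, B2)" by fastforce
  have A1: "A1 \<in> Obj C1" and A2: "A2 \<in> Obj C2" using A Ae obj_prod by auto
  have B1: "B1 \<in> Obj C1" and B2: "B2 \<in> Obj C2" using B Be obj_prod by auto
  have AB1: "arrow_to C1 A1 B1" and AB2: "arrow_to C2 A2 B2" using AB unfolding Ae Be arrow_prod by auto
  obtain D2 where D2: "D2 \<in> Obj C2" "ramsey_arrow C2 D2 B2 A2 k"
    using r2 k A2 B2 AB2 unfolding ramsey_objects_def by blast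
  define H2 where "H2 = binom C2 D2 A2"
  have fH2: "finite H2" using l2 A2 D2(1) unfolding locally_finite_def H2_def binom_def by blast
  define Y where "Y = (\<Pi>\<^sub>E g\<in>H2. {..<k})"
  have fY: "finite Y" unfolding Y_def using fH2 by (simp add: finite_PiE)
  define k1 where "k1 = max 2 (card Y)"
  obtain D1 where D1: "D1 \<in> Obj C1" "ramsey_arrow C1 D1 B1 A1 k1"
    using r1 A1 B1 AB1 unfolding ramsey_objects_def k1_def by (metis max.cobounded1)
  show "\<exists>Cc\<in>Obj (prod_cat C1 C2). ramsey_arrow (prod_cat C1 C2) Cc B A k"
  proof (intro bexI[of _ "(D1, D2)"])
    show "(D1, D2) \<in> Obj (prod_cat C1 C2)" using D1 D2 obj_prod by auto
    have BD1: "arrow_to C1 B1 D1" and BD2: "arrow_to C2 B2 D2"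
      using D1 D2 unfolding ramsey_arrow_def by auto
    show "ramsey_arrow (prod_cat C1 C2) (D1, D2) B A k"
      unfolding ramsey_arrow_def
    proof (intro conjI allI impI)
      show "arrow_to (prod_cat C1 C2) A B" by fact
      show "arrow_to (prod_cat C1 C2) B (D1, D2)" unfolding Be arrow_prod using BD1 BD2 by auto
      fix M assume M: "is_coloring k (binom (prod_cat C1 C2) (D1, D2) A) M"
      define col where "col = (\<lambda>f. SOME i. i < k \<and> f \<in> M i)"
      have col: "col f < k \<and> f \<in> M (col f)" if "f \<in> binom (prod_cat C1 C2) (D1, D2) A" for f
      proof -
        have "\<exists>i. i < k \<and> f \<in> M i" using M that unfolding is_coloring_def by blast
        then show ?thesis unfolding col_def by (rule someI_ex)
      qed
      define c1 where "c1 = (\<lambda>X1. \<lambda>X2\<in>H2. col (X1 \<times> X2))"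
      have "c1 X1 \<in> Y" if X1b: "X1 \<in> binom C1 D1 A1" for X1
      proof -
        obtain f1 where f1: "f1 \<in> hom C1 A1 D1" "X1 = aut_class C1 A1 f1"
          using X1b unfolding binom_def by blast
        have "col (X1 \<times> X2) < k" if X2b: "X2 \<in> H2" for X2
        proof -
          obtain g where g: "g \<in> hom C2 A2 D2" "X2 = aut_class C2 A2 g"
            using X2b unfolding H2_def binom_def by blast
          show ?thesis using col binom_prod_mem[OF f1(1) g(1)] f1 g Ae by metis
        qed
        then show ?thesis unfolding c1_def Y_def by auto
      qed
      then have "c1 ` binom C1 D1 A1 \<subseteq> Y" by blast
      moreover have "card Y \<le> k1" by (simp add: k1_def)
      ultimately obtain w1 y where w1: "w1 \<in> hom C1 B1 D1"
          "\<forall>f\<in>hom C1 A1 B1. c1 (aut_class C1 A1 (Comp C1 w1 f)) = y"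
        using mono_obj[OF D1(2) _ fY] by blast
      obtain f0 where f0: "f0 \<in> hom C1 A1 B1" using AB1 unfolding arrow_to_def by blast
      have wf0: "Comp C1 w1 f0 \<in> hom C1 A1 D1" using cat_comp[OF c1 A1 B1 D1(1) f0 w1(1)] .
      define c2 where "c2 = (\<lambda>X2. col (aut_class C1 A1 (Comp C1 w1 f0) \<times> X2))"
      have "c2 X2 < k" if X2b: "X2 \<in> binom C2 D2 A2" for X2
      proof -
        obtain g where g: "g \<in> hom C2 A2 D2" "X2 = aut_class C2 A2 g"
          using X2b unfolding binom_def by blast
        show ?thesis unfolding c2_def using col binom_prod_mem[OF wf0 g(1)] g Ae by metis
      qed
      then have "c2 ` binom C2 D2 A2 \<subseteq> {..<k}" by blast
      moreover have "card {..<k} \<le> k" by simp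
      ultimately obtain w2 i where w2: "w2 \<in> hom C2 B2 D2"
          "\<forall>f\<in>hom C2 A2 B2. c2 (aut_class C2 A2 (Comp C2 w2 f)) = i"
        using mono_obj[OF D2(2) _ finite_lessThan] by blast
      have ik: "i < k"
      proof -
        obtain g0 where g0: "g0 \<in> hom C2 A2 B2" using AB2 unfolding arrow_to_def by blast
        have "Comp C2 w2 g0 \<in> hom C2 A2 D2" using cat_comp[OF c2 A2 B2 D2(1) g0 w2(1)] .
        then have "c2 (aut_class C2 A2 (Comp C2 w2 g0)) < k"
          using \<open>c2 ` binom C2 D2 A2 \<subseteq> {..<k}\<close> unfolding binom_def by auto
        then show ?thesis using w2 g0 by auto
      qed
      have "\<forall>f\<in>hom (prod_cat C1 C2) A B. aut_class (prod_cat C1 C2) A (Comp (prod_cat C1 C2) (w1, w2) f) \<in> M i"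
      proof
        fix f assume "f \<in> hom (prod_cat C1 C2) A B"
        then obtain f1 f2 where f: "f1 \<in> hom C1 A1 B1" "f2 \<in> hom C2 A2 B2"
          and fe: "f = (f1, f2)"
          by (auto simp: Ae Be hom_prod)
        define X where "X = aut_class C1 A1 (Comp C1 w1 f1) \<times> aut_class C2 A2 (Comp C2 w2 f2)"
        have Xe: "aut_class (prod_cat C1 C2) A (Comp (prod_cat C1 C2) (w1, w2) f) = X"
          unfolding X_def fe Ae comp_prod aut_class_prod ..
        have h2: "Comp C2 w2 f2 \<in> hom C2 A2 D2" using cat_comp[OF c2 A2 B2 D2(1) f(2) w2(1)] .
        have h1: "Comp C1 w1 f1 \<in> hom C1 A1 D1" using cat_comp[OF c1 A1 B1 D1(1) f(1) w1(1)] .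
        have g: "aut_class C2 A2 (Comp C2 w2 f2) \<in> H2" unfolding H2_def binom_def using h2 by blast
        have "col X = c1 (aut_class C1 A1 (Comp C1 w1 f1)) (aut_class C2 A2 (Comp C2 w2 f2))"
          using g unfolding c1_def X_def by simp
        also have "\<dots> = c1 (aut_class C1 A1 (Comp C1 w1 f0)) (aut_class C2 A2 (Comp C2 w2 f2))"
          using w1 f f0 by simp
        also have "\<dots> = c2 (aut_class C2 A2 (Comp C2 w2 f2))" using g unfolding c1_def c2_def by simp
        also have "\<dots> = i" using w2 f by simp
        finally have "col X = i" .
        moreover have "X \<in> binom (prod_cat C1 C2) (D1, D2) A"
          unfolding X_def Ae using binom_prod_mem[OF h1 h2] .
        ultimately show "aut_class (prod_cat C1 C2) A (Comp (prod_cat C1 C2) (w1, w2) f) \<in> M i"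
          using col Xe by metis
      qed
      moreover have "(w1, w2) \<in> hom (prod_cat C1 C2) B (D1, D2)" using w1 w2 by (simp add: Be hom_prod)
      ultimately show "\<exists>i<k. \<exists>w\<in>hom (prod_cat C1 C2) B (D1, D2).
           \<forall>f\<in>hom (prod_cat C1 C2) A B. aut_class (prod_cat C1 C2) A (Comp (prod_cat C1 C2) w f) \<in> M i"
        using ik by blast
    qed
  qed
qed

theorem theorem8p1:
  fixes C1 :: "('o1, 'm1) cat" and C2 :: "('o2, 'm2) cat"
  assumes "is_category C1" and "is_category C2"
    and "locally_finite C1" and "locally_finite C2"
  shows "(ramsey_objects C1 \<and> ramsey_objects C2 \<longrightarrow> ramsey_objects (prod_cat C1 C2))
       \<and> (ramsey_morphisms C1 \<and> ramsey_morphisms C2 \<longrightarrow> ramsey_morphisms (prod_cat C1 C2))"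
  using prod_obj[OF assms(1,2,4)] prod_morph[OF assms(1,2,4)] by blast

end
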